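(* Let $k\ge 1$ and $m=k+1$. Consider the instance with jobs $1,\dots,k+1$, all of weight $1$, and machines $1,\dots,m$: each job $j\le k$ has processing time $1$ on machine $1$ and may not be assigned to any other machine; job $k+1$ has processing time $k^2$ on each machine $2,\dots,m$ and may not be assigned to machine $1$. Then every schedule has total completion time at least $k^2+k(k+1)/2>\tfrac32 k^2$, while the optimal value of (CP) on this instance is at most $k^2+k$. Consequently the ratio between the integral optimum and the optimum of (CP) is at least $3/2-O(1/k)$.
   Context: (CP) is the convex program: minimize $z$ subject to $z\ge \tfrac12 c^Tx+\tfrac12 x^TDx$, $z\ge c^Tx$, $\sum_{i}x_{ij}=1$ for all jobs $j$, $x\in[0,1]^{M\times J}$, with $x_{ij}=0$ whenever job $j$ may not be assigned to machine $i$. Here $c^Tx=\sum_i\sum_j w_jp_{ij}x_{ij}$ and $x^TDx=\sum_i\sum_j w_j\big(\sum_{j'\prec_i j}2p_{ij'}x_{ij'}+p_{ij}x_{ij}\big)x_{ij}$, where $\prec_i$ is Smith's order on machine $i$ (non-increasing $w_j/p_{ij}$, ties broken by job index). *)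

theory Defs
  imports Complex_Main
begin

definition smith_prec :: "(nat \<Rightarrow> nat \<Rightarrow> real) \<Rightarrow> (nat \<Rightarrow> real) \<Rightarrow> nat \<Rightarrow> nat \<Rightarrow> nat \<Rightarrow> bool" where
  "smith_prec p w i j' j \<longleftrightarrow>
     w j' / p i j' > w j / p i j \<or> (w j' / p i j' = w j / p i j \<and> j' < j)"

definition cTx :: "nat \<Rightarrow> nat \<Rightarrow> (nat \<Rightarrow> real) \<Rightarrow> (nat \<Rightarrow> nat \<Rightarrow> real) \<Rightarrow> (nat \<Rightarrow> nat \<Rightarrow> real) \<Rightarrow> real" where
  "cTx M J w p x = (\<Sum>i\<in>{1..M}. \<Sum>j\<in>{1..J}. w j * p i j * x i j)"

definition xDx :: "nat \<Rightarrow> nat \<Rightarrow> (nat \<Rightarrow> real) \<Rightarrow> (nat \<Rightarrow> nat \<Rightarrow> real) \<Rightarrow> (nat \<Rightarrow> nat \<Rightarrow> real) \<Rightarrow> real" where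
  "xDx M J w p x = (\<Sum>i\<in>{1..M}. \<Sum>j\<in>{1..J}.
      w j * ((\<Sum>j'\<in>{j'\<in>{1..J}. smith_prec p w i j' j}. 2 * p i j' * x i j') + p i j * x i j) * x i j)"

definition CP_feasible :: "nat \<Rightarrow> nat \<Rightarrow> (nat \<Rightarrow> real) \<Rightarrow> (nat \<Rightarrow> nat \<Rightarrow> real)
     \<Rightarrow> (nat \<Rightarrow> nat \<Rightarrow> bool) \<Rightarrow> (nat \<Rightarrow> nat \<Rightarrow> real) \<Rightarrow> real \<Rightarrow> bool" where
  "CP_feasible M J w p allowed x z \<longleftrightarrow>
     z \<ge> 1/2 * cTx M J w p x + 1/2 * xDx M J w p x \<and>
     z \<ge> cTx M J w p x \<and>
     (\<forall>j\<in>{1..J}. (\<Sum>i\<in>{1..M}. x i j) = 1) \<and>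
     (\<forall>i\<in>{1..M}. \<forall>j\<in>{1..J}. 0 \<le> x i j \<and> x i j \<le> 1) \<and>
     (\<forall>i\<in>{1..M}. \<forall>j\<in>{1..J}. \<not> allowed i j \<longrightarrow> x i j = 0)"

definition CP_value :: "nat \<Rightarrow> nat \<Rightarrow> (nat \<Rightarrow> real) \<Rightarrow> (nat \<Rightarrow> nat \<Rightarrow> real)
     \<Rightarrow> (nat \<Rightarrow> nat \<Rightarrow> bool) \<Rightarrow> real" where
  "CP_value M J w p allowed = Inf {z. \<exists>x. CP_feasible M J w p allowed x z}"

definition valid_schedule :: "nat \<Rightarrow> nat \<Rightarrow> (nat \<Rightarrow> nat \<Rightarrow> real)
     \<Rightarrow> (nat \<Rightarrow> nat \<Rightarrow> bool) \<Rightarrow> (nat \<Rightarrow> nat) \<Rightarrow> (nat \<Rightarrow> real) \<Rightarrow> bool" where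
  "valid_schedule M J p allowed a S \<longleftrightarrow>
     (\<forall>j\<in>{1..J}. a j \<in> {1..M} \<and> allowed (a j) j \<and> 0 \<le> S j) \<and>
     (\<forall>j\<in>{1..J}. \<forall>j'\<in>{1..J}. j \<noteq> j' \<and> a j = a j' \<longrightarrow>
        S j + p (a j) j \<le> S j' \<or> S j' + p (a j') j' \<le> S j)"

definition total_completion :: "nat \<Rightarrow> (nat \<Rightarrow> real) \<Rightarrow> (nat \<Rightarrow> nat \<Rightarrow> real)
     \<Rightarrow> (nat \<Rightarrow> nat) \<Rightarrow> (nat \<Rightarrow> real) \<Rightarrow> real" where
  "total_completion J w p a S = (\<Sum>j\<in>{1..J}. w j * (S j + p (a j) j))"

definition OPT :: "nat \<Rightarrow> nat \<Rightarrow> (nat \<Rightarrow> real) \<Rightarrow> (nat \<Rightarrow> nat \<Rightarrow> real)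
     \<Rightarrow> (nat \<Rightarrow> nat \<Rightarrow> bool) \<Rightarrow> real" where
  "OPT M J w p allowed =
     Inf {total_completion J w p a S | a S. valid_schedule M J p allowed a S}"

text \<open>Jobs j \<le> k: processing time 1, only machine 1. Job k+1: processing time k^2 on
  machines 2..k+1, not on machine 1. (Processing times of forbidden pairs are set to 0;
  they never matter since those x-variables are 0 and such assignments are forbidden.)\<close>
definition gap_w :: "nat \<Rightarrow> real" where "gap_w j = 1"

definition gap_p :: "nat \<Rightarrow> nat \<Rightarrow> nat \<Rightarrow> real" where
  "gap_p k i j = (if j \<le> k then (if i = 1 then 1 else 0)
                   else (if 2 \<le> i then real k ^ 2 else 0))"

definition gap_allowed :: "nat \<Rightarrow> nat \<Rightarrow> nat \<Rightarrow> bool" where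
  "gap_allowed k i j = (if j \<le> k then i = 1 else 2 \<le> i)"

end

theory Submission imports Defs begin

lemma unit_sched:
  fixes S :: "nat \<Rightarrow> real"
  shows "\<And>A. finite A \<Longrightarrow> card A = n \<Longrightarrow> (\<forall>j\<in>A. 0 \<le> S j) \<Longrightarrow>
    (\<forall>j\<in>A. \<forall>j'\<in>A. j \<noteq> j' \<longrightarrow> S j + 1 \<le> S j' \<or> S j' + 1 \<le> S j) \<Longrightarrow>
    (\<Sum>j\<in>A. S j + 1) \<ge> real n * (real n + 1) / 2 \<and> (A \<noteq> {} \<longrightarrow> (\<exists>j\<in>A. S j + 1 \<ge> real n))"
proof (induction n)
  case 0
  then show ?case by simp
next
  case (Suc n)
  then have ne: "A \<noteq> {}" by auto
  have "Max (S ` A) \<in> S ` A" using Suc.prems ne by simp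
  then obtain m where m: "m \<in> A" "S m = Max (S ` A)" by auto
  have mx: "\<forall>j\<in>A. S j \<le> S m" using m Suc.prems by simp
  define B where "B = A - {m}"
  have fB: "finite B" "card B = n" using Suc.prems m by (auto simp: B_def)
  have IH: "(\<Sum>j\<in>B. S j + 1) \<ge> real n * (real n + 1) / 2 \<and> (B \<noteq> {} \<longrightarrow> (\<exists>j\<in>B. S j + 1 \<ge> real n))"
    using Suc.IH[OF fB] Suc.prems by (auto simp: B_def)
  have lt: "\<forall>j\<in>B. S j + 1 \<le> S m"
  proof
    fix j assume j: "j \<in> B"
    then have "j \<noteq> m" "j \<in> A" by (auto simp: B_def)
    then show "S j + 1 \<le> S m" using Suc.prems(4) m mx by force
  qed
  have Sm: "S m \<ge> real n"
  proof (cases "B = {}")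
    case True have "S m \<ge> 0" using m(1) Suc.prems(3) by blast
    then show ?thesis using fB True by simp
  next
    case False then obtain j where "j \<in> B" "S j + 1 \<ge> real n" using IH by auto
    then show ?thesis using lt by force
  qed
  have "(\<Sum>j\<in>A. S j + 1) = S m + 1 + (\<Sum>j\<in>B. S j + 1)"
    using Suc.prems m by (simp add: B_def sum.remove)
  then have "(\<Sum>j\<in>A. S j + 1) \<ge> real (Suc n) * (real (Suc n) + 1) / 2"
    using IH Sm by (simp add: field_simps)
  moreover have "\<exists>j\<in>A. S j + 1 \<ge> real (Suc n)" using m(1) Sm by (intro bexI[of _ m]) auto
  ultimately show ?case by blast
qed

lemma odd_sum: "(\<Sum>j\<in>{1..k}. 2 * real j - 1) = real k ^ 2"
  by (induction k) (auto simp: power2_eq_square algebra_simps)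

lemma sched_lb:
  assumes k: "k \<ge> 1" and v: "valid_schedule (k+1) (k+1) (gap_p k) (gap_allowed k) a S"
  shows "total_completion (k+1) gap_w (gap_p k) a S \<ge> real k ^ 2 + real k * (real k + 1) / 2"
proof -
  have a1: "\<forall>j\<in>{1..k}. a j = 1" using v by (auto simp: valid_schedule_def gap_allowed_def)
  have ak: "a (k+1) \<ge> 2" using v by (auto simp: valid_schedule_def gap_allowed_def)
  have Sk: "S (k+1) \<ge> 0" using v by (auto simp: valid_schedule_def)
  have pos: "\<forall>j\<in>{1..k}. 0 \<le> S j" using v by (auto simp: valid_schedule_def)
  have no: "\<forall>j\<in>{1..k}. \<forall>j'\<in>{1..k}. j \<noteq> j' \<longrightarrow> S j + 1 \<le> S j' \<or> S j' + 1 \<le> S j"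
  proof (intro ballI impI)
    fix j j' assume j: "j \<in> {1..k}" "j' \<in> {1..k}" "j \<noteq> j'"
    have aa: "a j = a j'" using a1 j by simp
    have "j \<in> {1..k+1}" "j' \<in> {1..k+1}" using j by auto
    then have "S j + gap_p k (a j) j \<le> S j' \<or> S j' + gap_p k (a j') j' \<le> S j"
      using v aa j(3) unfolding valid_schedule_def by blast
    then show "S j + 1 \<le> S j' \<or> S j' + 1 \<le> S j" using j a1 by (auto simp: gap_p_def)
  qed
  have L: "(\<Sum>j\<in>{1..k}. S j + 1) \<ge> real k * (real k + 1) / 2"
    using unit_sched[of "{1..k}" k S] pos no by simp
  have "total_completion (k+1) gap_w (gap_p k) a S = (\<Sum>j\<in>{1..k}. S j + 1) + (S (k+1) + real k ^ 2)"
  proof -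
    have "total_completion (k+1) gap_w (gap_p k) a S = (\<Sum>j\<in>{1..k}. S j + gap_p k (a j) j) + (S (k+1) + gap_p k (a (k+1)) (k+1))"
      by (simp add: total_completion_def gap_w_def)
    also have "(\<Sum>j\<in>{1..k}. S j + gap_p k (a j) j) = (\<Sum>j\<in>{1..k}. S j + 1)"
      using a1 by (intro sum.cong) (auto simp: gap_p_def)
    also have "gap_p k (a (k+1)) (k+1) = real k ^ 2" using ak by (simp add: gap_p_def)
    finally show ?thesis .
  qed
  then show ?thesis using L Sk by simp
qed

lemma cTx_val:
  assumes k: "k \<ge> 1" and f: "CP_feasible (k+1) (k+1) gap_w (gap_p k) (gap_allowed k) x z"
  shows "cTx (k+1) (k+1) gap_w (gap_p k) x = real k ^ 2 + real k"
proof -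
  define c where "c j = (if j \<le> k then 1 else real k ^ 2)" for j
  have sum1: "\<forall>j\<in>{1..k+1}. (\<Sum>i\<in>{1..k+1}. x i j) = 1" using f by (simp add: CP_feasible_def)
  have z: "\<forall>i\<in>{1..k+1}. \<forall>j\<in>{1..k+1}. \<not> gap_allowed k i j \<longrightarrow> x i j = 0" using f by (simp add: CP_feasible_def)
  have "cTx (k+1) (k+1) gap_w (gap_p k) x = (\<Sum>j\<in>{1..k+1}. \<Sum>i\<in>{1..k+1}. gap_w j * gap_p k i j * x i j)"
    unfolding cTx_def by (rule sum.swap)
  also have "\<dots> = (\<Sum>j\<in>{1..k+1}. c j * (\<Sum>i\<in>{1..k+1}. x i j))"
  proof (intro sum.cong refl)
    fix j assume j: "j \<in> {1..k+1}"
    show "(\<Sum>i\<in>{1..k+1}. gap_w j * gap_p k i j * x i j) = c j * (\<Sum>i\<in>{1..k+1}. x i j)"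
      unfolding sum_distrib_left
    proof (intro sum.cong refl)
      fix i assume i: "i \<in> {1..k+1}"
      show "gap_w j * gap_p k i j * x i j = c j * x i j"
        using z i j by (cases "gap_allowed k i j") (auto simp: gap_w_def gap_p_def c_def gap_allowed_def)
    qed
  qed
  also have "\<dots> = (\<Sum>j\<in>{1..k+1}. c j)" using sum1 by simp
  also have "\<dots> = (\<Sum>j\<in>{1..k}. c j) + c (k+1)" by simp
  also have "(\<Sum>j\<in>{1..k}. c j) = real k" by (simp add: c_def)
  finally show ?thesis by (simp add: c_def)
qed

definition x0 :: "nat \<Rightarrow> nat \<Rightarrow> nat \<Rightarrow> real" where
  "x0 k i j = (if j \<le> k then (if i = 1 then 1 else 0) else (if 2 \<le> i then 1 / real k else 0))"

lemma xDx_term: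
  assumes k: "k \<ge> 1" and i: "i \<in> {1..k+1}" and j: "j \<in> {1..k+1}"
  shows "gap_w j * ((\<Sum>j'\<in>{j'\<in>{1..k+1}. smith_prec (gap_p k) gap_w i j' j}. 2 * gap_p k i j' * x0 k i j')
            + gap_p k i j * x0 k i j) * x0 k i j
       = (if i = 1 \<and> j \<le> k then 2 * real j - 1 else if 2 \<le> i \<and> j = k+1 then 1 else 0)"
proof (cases "i = 1 \<and> j \<le> k")
  case True
  have P: "{j'\<in>{1..k+1}. smith_prec (gap_p k) gap_w i j' j} = {1..<j}"
    using True j by (auto simp: smith_prec_def gap_p_def gap_w_def)
  have "(\<Sum>j'\<in>{1..<j}. 2 * gap_p k i j' * x0 k i j') = (\<Sum>j'\<in>{1..<j}. 2)"
    using True by (intro sum.cong) (auto simp: gap_p_def x0_def)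
  then show ?thesis using True j P by (simp add: gap_w_def gap_p_def x0_def of_nat_diff)
next
  case False
  show ?thesis
  proof (cases "2 \<le> i \<and> j = k+1")
    case True
    have "(\<Sum>j'\<in>{j'\<in>{1..k+1}. smith_prec (gap_p k) gap_w i j' j}. 2 * gap_p k i j' * x0 k i j') = 0"
      using True by (intro sum.neutral) (auto simp: smith_prec_def x0_def le_Suc_eq)
    then show ?thesis using True k by (simp add: gap_w_def gap_p_def x0_def power2_eq_square)
  next
    case False2: False
    have "x0 k i j = 0" using False False2 i j by (auto simp: x0_def)
    then show ?thesis using False False2 by auto
  qed
qed

lemma xDx_val:
  assumes k: "k \<ge> 1"
  shows "xDx (k+1) (k+1) gap_w (gap_p k) (x0 k) = real k ^ 2 + real k"
proof -
  let ?t = "\<lambda>(i::nat) (j::nat). (if i = 1 \<and> j \<le> k then 2 * real j - 1 else if 2 \<le> i \<and> j = k+1 then 1 else (0::real))"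
  have "xDx (k+1) (k+1) gap_w (gap_p k) (x0 k) = (\<Sum>i\<in>{1..k+1}. \<Sum>j\<in>{1..k+1}. ?t i j)"
    unfolding xDx_def using xDx_term[OF k] by (intro sum.cong refl) auto
  also have "\<dots> = (\<Sum>j\<in>{1..k+1}. ?t 1 j) + (\<Sum>i\<in>{2..k+1}. \<Sum>j\<in>{1..k+1}. ?t i j)"
  proof -
    have "{1..k+1} = insert 1 {2..k+1}" by auto
    then show ?thesis by simp
  qed
  also have "(\<Sum>j\<in>{1..k+1}. ?t 1 j) = (\<Sum>j\<in>{1..k}. 2 * real j - 1)" by simp
  also have "(\<Sum>i\<in>{2..k+1}. \<Sum>j\<in>{1..k+1}. ?t i j) = (\<Sum>i\<in>{2..k+1}. 1)"
  proof (intro sum.cong refl)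
    fix i assume i: "i \<in> {2..k+1}"
    have "(\<Sum>j\<in>{1..k+1}. ?t i j) = (\<Sum>j\<in>{1..k}. ?t i j) + ?t i (k+1)" by simp
    then show "(\<Sum>j\<in>{1..k+1}. ?t i j) = 1" using i by simp
  qed
  finally show ?thesis using odd_sum by simp
qed

lemma x0_feas:
  assumes k: "k \<ge> 1"
  shows "CP_feasible (k+1) (k+1) gap_w (gap_p k) (gap_allowed k) (x0 k) (real k ^ 2 + real k)"
proof -
  have c: "cTx (k+1) (k+1) gap_w (gap_p k) (x0 k) = real k ^ 2 + real k"
  proof -
    have "cTx (k+1) (k+1) gap_w (gap_p k) (x0 k) = (\<Sum>i\<in>{1..k+1}. \<Sum>j\<in>{1..k+1}. (if i = 1 \<and> j \<le> k then 1 else if 2 \<le> i \<and> j = k+1 then real k else 0))"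
      unfolding cTx_def using k by (intro sum.cong refl) (auto simp: gap_w_def gap_p_def x0_def power2_eq_square)
    also have "\<dots> = (\<Sum>j\<in>{1..k+1}. (if j \<le> k then 1 else 0)) + (\<Sum>i\<in>{2..k+1}. \<Sum>j\<in>{1..k+1}. (if j = k+1 then real k else 0))"
    proof -
      have "{1..k+1} = insert 1 {2..k+1}" by auto
      then show ?thesis by (simp cong: if_cong)
    qed
    also have "(\<Sum>j\<in>{1..k+1}. (if j \<le> k then 1 else 0)) = (real k)"
    proof -
      have "{1..k+1} = insert (k+1) {1..k}" by auto
      then show ?thesis by simp
    qed
    also have "(\<Sum>i\<in>{2..k+1}. \<Sum>j\<in>{1..k+1}. (if j = k+1 then real k else 0)) = (\<Sum>i\<in>{2..k+1}. real k)"
      by (intro sum.cong refl) simp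
    finally show ?thesis by (simp add: power2_eq_square)
  qed
  have s: "\<forall>j\<in>{1..k+1}. (\<Sum>i\<in>{1..k+1}. x0 k i j) = 1"
  proof
    fix j assume j: "j \<in> {1..k+1}"
    have "{1..k+1} = insert 1 {2..k+1}" by auto
    then have e: "(\<Sum>i\<in>{1..k+1}. x0 k i j) = x0 k 1 j + (\<Sum>i\<in>{2..k+1}. x0 k i j)" by simp
    show "(\<Sum>i\<in>{1..k+1}. x0 k i j) = 1"
    proof (cases "j \<le> k")
      case True then show ?thesis unfolding e by (simp add: x0_def)
    next
      case False
      have "(\<Sum>i\<in>{2..k+1}. x0 k i j) = (\<Sum>i\<in>{2..k+1}. 1 / real k)"
        using False by (intro sum.cong) (auto simp: x0_def)
      then show ?thesis unfolding e using False k by (simp add: x0_def)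
    qed
  qed
  have b: "\<forall>i\<in>{1..k+1}. \<forall>j\<in>{1..k+1}. 0 \<le> x0 k i j \<and> x0 k i j \<le> 1"
    using k by (auto simp: x0_def)
  have a: "\<forall>i\<in>{1..k+1}. \<forall>j\<in>{1..k+1}. \<not> gap_allowed k i j \<longrightarrow> x0 k i j = 0"
    by (auto simp: x0_def gap_allowed_def)
  show ?thesis unfolding CP_feasible_def using c s b a xDx_val[OF k] by simp
qed

lemma CP_val:
  assumes k: "k \<ge> 1"
  shows "CP_value (k+1) (k+1) gap_w (gap_p k) (gap_allowed k) = real k ^ 2 + real k"
  unfolding CP_value_def
proof (rule cInf_eq_minimum)
  show "real k ^ 2 + real k \<in> {z. \<exists>x. CP_feasible (k+1) (k+1) gap_w (gap_p k) (gap_allowed k) x z}"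
    using x0_feas[OF k] by blast
next
  fix z assume "z \<in> {z. \<exists>x. CP_feasible (k+1) (k+1) gap_w (gap_p k) (gap_allowed k) x z}"
  then obtain x where f: "CP_feasible (k+1) (k+1) gap_w (gap_p k) (gap_allowed k) x z" by blast
  then show "real k ^ 2 + real k \<le> z" using cTx_val[OF k f] by (simp add: CP_feasible_def)
qed

lemma OPT_lb:
  assumes k: "k \<ge> 1"
  shows "OPT (k+1) (k+1) gap_w (gap_p k) (gap_allowed k) \<ge> real k ^ 2 + real k * (real k + 1) / 2"
  unfolding OPT_def
proof (rule cInf_greatest)
  define a :: "nat \<Rightarrow> nat" where "a j = (if j \<le> k then 1 else 2)" for j
  define S :: "nat \<Rightarrow> real" where "S j = (if j \<le> k then real j - 1 else 0)" for j
  have "valid_schedule (k+1) (k+1) (gap_p k) (gap_allowed k) a S"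
    unfolding valid_schedule_def
  proof (intro conjI ballI impI)
    fix j assume j: "j \<in> {1..k+1}"
    show "a j \<in> {1..k+1}" using j k by (auto simp: a_def)
    show "gap_allowed k (a j) j" by (auto simp: a_def gap_allowed_def)
    show "0 \<le> S j" using j by (auto simp: S_def)
  next
    fix j j' assume j: "j \<in> {1..k+1}" "j' \<in> {1..k+1}" "j \<noteq> j' \<and> a j = a j'"
    show "S j + gap_p k (a j) j \<le> S j' \<or> S j' + gap_p k (a j') j' \<le> S j"
    proof (cases "j \<le> k")
      case True
      have "j' \<le> k"
      proof (rule ccontr)
        assume "\<not> j' \<le> k"
        then have "a j' = 2" "a j = 1" using True by (simp_all add: a_def)
        then show False using j(3) by simp
      qed
      then have e: "S j = real j - 1" "S j' = real j' - 1" "a j = 1" "a j' = 1" "gap_p k 1 j = 1" "gap_p k 1 j' = 1"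
        using True by (simp_all add: a_def S_def gap_p_def)
      have "j < j' \<or> j' < j" using j(3) by linarith
      then show ?thesis
      proof
        assume "j < j'" then have "real j + 1 \<le> real j'" by linarith
        then show ?thesis unfolding e by simp
      next
        assume "j' < j" then have "real j' + 1 \<le> real j" by linarith
        then show ?thesis unfolding e by simp
      qed
    next
      case False
      then have "j = k+1" using j(1) by simp
      moreover have "j' \<le> k"
      proof (rule ccontr)
        assume "\<not> j' \<le> k"
        then have "j' = k+1" using j(2) by simp
        then show False using j(3) \<open>j = k+1\<close> by simp
      qed
      ultimately have "a j = 2" "a j' = 1" by (simp_all add: a_def)
      then show ?thesis using j(3) by simp
    qed
  qed
  then show "{total_completion (k+1) gap_w (gap_p k) a S |a S. valid_schedule (k+1) (k+1) (gap_p k) (gap_allowed k) a S} \<noteq> {}"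
    by blast
next
  fix t assume "t \<in> {total_completion (k+1) gap_w (gap_p k) a S |a S. valid_schedule (k+1) (k+1) (gap_p k) (gap_allowed k) a S}"
  then show "real k ^ 2 + real k * (real k + 1) / 2 \<le> t" using sched_lb[OF k] by blast
qed

theorem mainTheorem4:
  fixes k :: nat
  assumes "k \<ge> 1"
  shows "(\<forall>a S. valid_schedule (k+1) (k+1) (gap_p k) (gap_allowed k) a S \<longrightarrow>
            total_completion (k+1) gap_w (gap_p k) a S \<ge> real k ^ 2 + real k * (real k + 1) / 2)
       \<and> real k ^ 2 + real k * (real k + 1) / 2 > 3/2 * real k ^ 2
       \<and> CP_value (k+1) (k+1) gap_w (gap_p k) (gap_allowed k) \<le> real k ^ 2 + real k
       \<and> OPT (k+1) (k+1) gap_w (gap_p k) (gap_allowed k)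
           / CP_value (k+1) (k+1) gap_w (gap_p k) (gap_allowed k) \<ge> 3/2 - 1 / (real k + 1)"
proof (intro conjI allI impI)
  fix a S assume "valid_schedule (k+1) (k+1) (gap_p k) (gap_allowed k) a S"
  then show "total_completion (k+1) gap_w (gap_p k) a S \<ge> real k ^ 2 + real k * (real k + 1) / 2"
    using sched_lb[OF assms] by blast
next
  have "real k \<ge> 1" using assms by simp
  then show "real k ^ 2 + real k * (real k + 1) / 2 > 3/2 * real k ^ 2"
    by (simp add: power2_eq_square field_simps)
next
  show "CP_value (k+1) (k+1) gap_w (gap_p k) (gap_allowed k) \<le> real k ^ 2 + real k"
    using CP_val[OF assms] by simp
next
  have kp: "real k \<ge> 1" using assms by simp
  have "real k ^ 2 \<ge> 0" by simp
  then have pos: "real k ^ 2 + real k > 0" using kp by linarith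
  have "3/2 - 1 / (real k + 1) = (real k ^ 2 + real k * (real k + 1) / 2) / (real k ^ 2 + real k)"
  proof -
    have d1: "real k * real k + real k \<noteq> 0" "real k + 1 \<noteq> 0" using pos kp by (auto simp: power2_eq_square)
    have "(real k ^ 2 + real k * (real k + 1) / 2) / (real k ^ 2 + real k) = (3 * real k + 1) / (2 * (real k + 1))"
      using d1 by (simp add: power2_eq_square field_simps)
    also have "\<dots> = 3/2 - 1 / (real k + 1)" using d1 by (simp add: field_simps)
    finally show ?thesis by simp
  qed
  also have "\<dots> \<le> OPT (k+1) (k+1) gap_w (gap_p k) (gap_allowed k) / (real k ^ 2 + real k)"
    using OPT_lb[OF assms] pos by (simp add: divide_right_mono)
  finally show "OPT (k+1) (k+1) gap_w (gap_p k) (gap_allowed k)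
           / CP_value (k+1) (k+1) gap_w (gap_p k) (gap_allowed k) \<ge> 3/2 - 1 / (real k + 1)"
    using CP_val[OF assms] by simp
qed

end
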